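(* Let $\mathcal{F}$ be a finite forest with at least one vertex and without isolated vertices. Then $\mathcal{NC}(\mathcal{F})$ is vertex decomposable if and only if $\mathcal{F}$ is connected and has at most two internal vertices.
   Context: An internal vertex of a forest is a vertex of degree greater than $1$. For a finite simple graph $H$, the non-cover complex $\mathcal{NC}(H)$ is the simplicial complex whose simplices are the subsets $S\subseteq V(H)$ such that $V(H)\setminus S$ contains both endpoints of some edge of $H$. For a simplicial complex $K$ and a vertex $v$, $\mathrm{lk}(v,K)=\{\tau\in K: v\notin\tau,\ \tau\cup\{v\}\in K\}$ and $\mathrm{del}(v,K)=\{\tau\in K: v\notin\tau\}$. A simplicial complex $K$ is vertex decomposable if $K$ is a simplex (the set of all subsets of a finite set, including $\{\emptyset\}$), or $K$ contains a vertex $v$ such that (i) both $\mathrm{lk}(v,K)$ and $\mathrm{del}(v,K)$ are vertex decomposable, and (ii) every facet (maximal simplex) of $\mathrm{del}(v,K)$ is a facet of $K$. *)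

theory Defs
  imports Main
begin

definition simple_graph :: "'a set \<Rightarrow> 'a set set \<Rightarrow> bool" where
  "simple_graph V E \<longleftrightarrow> finite V \<and> (\<forall>e\<in>E. e \<subseteq> V \<and> card e = 2)"

definition adj :: "'a set set \<Rightarrow> 'a \<Rightarrow> 'a \<Rightarrow> bool" where
  "adj E u v \<longleftrightarrow> {u, v} \<in> E"

definition degree :: "'a set set \<Rightarrow> 'a \<Rightarrow> nat" where
  "degree E v = card {e \<in> E. v \<in> e}"

definition internal_vertices :: "'a set \<Rightarrow> 'a set set \<Rightarrow> 'a set" where
  "internal_vertices V E = {v \<in> V. degree E v > 1}"

definition no_isolated_vertices :: "'a set \<Rightarrow> 'a set set \<Rightarrow> bool" where
  "no_isolated_vertices V E \<longleftrightarrow> (\<forall>v\<in>V. degree E v \<ge> 1)"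

definition connected_graph :: "'a set \<Rightarrow> 'a set set \<Rightarrow> bool" where
  "connected_graph V E \<longleftrightarrow> (\<forall>u\<in>V. \<forall>v\<in>V. (adj E)\<^sup>*\<^sup>* u v)"

definition is_cycle :: "'a set \<Rightarrow> 'a set set \<Rightarrow> 'a list \<Rightarrow> bool" where
  "is_cycle V E cs \<longleftrightarrow> length cs \<ge> 3 \<and> distinct cs \<and> set cs \<subseteq> V \<and>
     (\<forall>i < length cs - 1. adj E (cs ! i) (cs ! (i + 1))) \<and>
     adj E (last cs) (hd cs)"

definition forest :: "'a set \<Rightarrow> 'a set set \<Rightarrow> bool" where
  "forest V E \<longleftrightarrow> simple_graph V E \<and> (\<nexists>cs. is_cycle V E cs)"

definition non_cover_complex :: "'a set \<Rightarrow> 'a set set \<Rightarrow> 'a set set" where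
  "non_cover_complex V E = {S. S \<subseteq> V \<and> (\<exists>e\<in>E. e \<subseteq> V - S)}"

definition lk :: "'a \<Rightarrow> 'a set set \<Rightarrow> 'a set set" where
  "lk v K = {\<tau> \<in> K. v \<notin> \<tau> \<and> insert v \<tau> \<in> K}"

definition del :: "'a \<Rightarrow> 'a set set \<Rightarrow> 'a set set" where
  "del v K = {\<tau> \<in> K. v \<notin> \<tau>}"

definition facet :: "'a set \<Rightarrow> 'a set set \<Rightarrow> bool" where
  "facet F K \<longleftrightarrow> F \<in> K \<and> \<not> (\<exists>G\<in>K. F \<subset> G)"

inductive vertex_decomposable :: "'a set set \<Rightarrow> bool" where
  simplex: "finite A \<Longrightarrow> vertex_decomposable (Pow A)"
| decomp: "{v} \<in> K \<Longrightarrow> vertex_decomposable (lk v K) \<Longrightarrow>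
     vertex_decomposable (del v K) \<Longrightarrow>
     (\<forall>F. facet F (del v K) \<longrightarrow> facet F K) \<Longrightarrow> vertex_decomposable K"

end

theory Submission
  imports Defs
begin


definition dclosed :: "'a set set \<Rightarrow> bool" where
  "dclosed K \<longleftrightarrow> (\<forall>S\<in>K. \<forall>T. T \<subseteq> S \<longrightarrow> T \<in> K)"

definition pure :: "nat \<Rightarrow> 'a set set \<Rightarrow> bool" where
  "pure d K \<longleftrightarrow> (\<forall>F. facet F K \<longrightarrow> card F = d)"

definition fadj :: "'a set set \<Rightarrow> 'a set \<Rightarrow> 'a set \<Rightarrow> bool" where
  "fadj K F G \<longleftrightarrow> facet F K \<and> facet G K \<and> card (F - G) \<le> 1"

definition SC :: "'a set set \<Rightarrow> bool" where
  "SC K \<longleftrightarrow> (\<forall>F G. facet F K \<longrightarrow> facet G K \<longrightarrow> (fadj K)\<^sup>*\<^sup>* F G)"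

definition shed :: "'a set set \<Rightarrow> 'a \<Rightarrow> bool" where
  "shed K v \<longleftrightarrow> (\<forall>F. facet F (del v K) \<longrightarrow> facet F K)"

lemma dclosedD: "dclosed K \<Longrightarrow> S \<in> K \<Longrightarrow> T \<subseteq> S \<Longrightarrow> T \<in> K"
  unfolding dclosed_def by blast

lemma fin_elem: "finite K \<Longrightarrow> dclosed K \<Longrightarrow> S \<in> K \<Longrightarrow> finite S"
proof -
  assume a: "finite K" "dclosed K" "S \<in> K"
  have "Pow S \<subseteq> K" using a dclosedD by blast
  hence "finite (Pow S)" using a(1) finite_subset by blast
  thus ?thesis by simp
qed

lemma ext_facet: assumes "finite K" "S \<in> K" shows "\<exists>F. facet F K \<and> S \<subseteq> F"
proof -
  let ?A = "{G\<in>K. S \<subseteq> G}"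
  have "finite ?A" "?A \<noteq> {}" using assms by auto
  from finite_has_maximal[OF this] obtain m where m: "m \<in> ?A" "\<forall>b\<in>?A. m \<le> b \<longrightarrow> m = b"
    by (elim bexE) simp
  have "facet m K" unfolding facet_def using m by blast
  thus ?thesis using m by blast
qed

lemma dclosed_lk: assumes "dclosed K" shows "dclosed (lk x K)"
  unfolding dclosed_def
proof (intro ballI allI impI)
  fix S T assume S: "S \<in> lk x K" and T: "T \<subseteq> S"
  have "S \<in> K" "x \<notin> S" "insert x S \<in> K" using S unfolding lk_def by auto
  moreover have "insert x T \<subseteq> insert x S" using T by auto
  ultimately show "T \<in> lk x K" unfolding lk_def using T dclosedD[OF assms] by auto
qed

lemma dclosed_del: assumes "dclosed K" shows "dclosed (del x K)"
  unfolding dclosed_def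
proof (intro ballI allI impI)
  fix S T assume S: "S \<in> del x K" and T: "T \<subseteq> S"
  have "S \<in> K" "x \<notin> S" using S unfolding del_def by auto
  thus "T \<in> del x K" unfolding del_def using T dclosedD[OF assms] by auto
qed

lemma lk_facet: assumes "dclosed K" "facet H (lk x K)"
  shows "facet (insert x H) K \<and> x \<notin> H"
proof -
  have H: "H \<in> K" "x \<notin> H" "insert x H \<in> K" using assms(2) unfolding facet_def lk_def by auto
  have "\<not> (\<exists>G\<in>K. insert x H \<subset> G)"
  proof
    assume "\<exists>G\<in>K. insert x H \<subset> G"
    then obtain G where G: "G \<in> K" "insert x H \<subset> G" by blast
    have "G - {x} \<in> lk x K" unfolding lk_def using G dclosedD[OF assms(1) G(1)]
      by (auto simp: insert_absorb)
    moreover have "H \<subset> G - {x}" using G H by blast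
    ultimately show False using assms(2) unfolding facet_def by blast
  qed
  thus ?thesis using H unfolding facet_def by blast
qed

lemma facet_lk: assumes "dclosed K" "facet F K" "x \<in> F"
  shows "facet (F - {x}) (lk x K)"
proof -
  have F: "F \<in> K" using assms unfolding facet_def by blast
  have "F - {x} \<in> lk x K" unfolding lk_def using F dclosedD[OF assms(1) F] assms(3)
    by (auto simp: insert_absorb)
  moreover have "\<not> (\<exists>T\<in>lk x K. F - {x} \<subset> T)"
  proof
    assume "\<exists>T\<in>lk x K. F - {x} \<subset> T"
    then obtain T where "T \<in> lk x K" "F - {x} \<subset> T" by blast
    hence "insert x T \<in> K" "F \<subset> insert x T" using assms(3) unfolding lk_def by auto
    thus False using assms(2) unfolding facet_def by blast
  qed
  ultimately show ?thesis unfolding facet_def by blast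
qed

lemma facet_del: "facet F K \<Longrightarrow> v \<notin> F \<Longrightarrow> facet F (del v K)"
  unfolding facet_def del_def by blast

lemma facet_Pow: "facet F (Pow A) \<Longrightarrow> F = A"
  unfolding facet_def by blast

lemma pure_lk: assumes "finite K" "dclosed K" "pure d K" shows "pure (d - 1) (lk x K)"
  unfolding pure_def
proof (intro allI impI)
  fix H assume "facet H (lk x K)"
  from lk_facet[OF assms(2) this] have "facet (insert x H) K" "x \<notin> H" by auto
  moreover have "insert x H \<in> K" using calculation(1) unfolding facet_def by auto
  moreover have "finite (insert x H)" using fin_elem[OF assms(1,2) calculation(3)] .
  ultimately show "card H = d - 1" using assms(3) unfolding pure_def by auto
qed

lemma pure_del: "pure d K \<Longrightarrow> shed K v \<Longrightarrow> pure d (del v K)"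
  unfolding pure_def shed_def by blast

lemma lk_del_comm: "x \<noteq> v \<Longrightarrow> lk x (del v K) = del v (lk x K)"
  unfolding lk_def del_def by auto

lemma rtranclp_map:
  assumes "\<And>a b. R a b \<Longrightarrow> S (f a) (f b)" "R\<^sup>*\<^sup>* a b"
  shows "S\<^sup>*\<^sup>* (f a) (f b)"
  using assms(2) by induction (auto intro: rtranclp.rtrancl_into_rtrancl assms(1))

lemma fadj_sym: assumes "finite K" "dclosed K" "pure d K" "fadj K F G" shows "fadj K G F"
proof -
  have f: "facet F K" "facet G K" "card (F - G) \<le> 1" using assms(4) unfolding fadj_def by auto
  have fin: "finite F" "finite G" using f fin_elem[OF assms(1,2)] unfolding facet_def by auto
  have "card F = card G" using f assms(3) unfolding pure_def by auto
  hence "card (G - F) = card (F - G)"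
    using fin by (metis Int_commute card_Diff_subset_Int finite_Int)
  thus ?thesis using f unfolding fadj_def by auto
qed

lemma rtranclp_sym':
  assumes "R\<^sup>*\<^sup>* a b" "\<And>x y. R x y \<Longrightarrow> R y x" shows "R\<^sup>*\<^sup>* b a"
  using assms(1) by induction (auto intro: converse_rtranclp_into_rtranclp assms(2))

lemma SC_from_del:
  assumes fin: "finite K" and dc: "dclosed K" and pu: "pure d K"
    and sc: "SC (del v K)" and sh: "shed K v"
  shows "SC K"
proof -
  have lift: "(fadj K)\<^sup>*\<^sup>* F G" if "(fadj (del v K))\<^sup>*\<^sup>* F G" for F G
    using rtranclp_map[where f=id and R="fadj (del v K)" and S="fadj K"] that sh
    unfolding fadj_def shed_def by auto
  have bridge: "\<exists>F. facet F (del v K) \<and> (fadj K)\<^sup>*\<^sup>* G F" if G: "facet G K" for G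
  proof (cases "v \<in> G")
    case False
    thus ?thesis using facet_del[OF G] by blast
  next
    case True
    have GK: "G \<in> K" using G unfolding facet_def by auto
    have finG: "finite G" using fin_elem[OF fin dc GK] .
    let ?t = "G - {v}"
    have tdel: "?t \<in> del v K" using dclosedD[OF dc GK] unfolding del_def by auto
    have "\<not> facet ?t K" using True GK unfolding facet_def by blast
    hence "\<not> facet ?t (del v K)" using sh unfolding shed_def by blast
    then obtain T where T: "T \<in> del v K" "?t \<subset> T" using tdel unfolding facet_def by blast
    obtain F where F: "facet F (del v K)" "T \<subseteq> F"
      using ext_facet[of "del v K" T] fin T unfolding del_def by auto
    have FK: "facet F K" using F sh unfolding shed_def by blast
    have finF: "finite F" using fin_elem[OF fin dc] FK unfolding facet_def by auto
    have cF: "card F = card G" using FK G pu unfolding pure_def by auto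
    have sub: "?t \<subseteq> F" using F T by blast
    have "card (F - ?t) = card F - card ?t" using card_Diff_subset[OF _ sub] finG by auto
    also have "card ?t = card G - 1" using True finG by auto
    finally have "card (F - ?t) \<le> 1" using cF by auto
    moreover have "F - G \<subseteq> F - ?t" by blast
    ultimately have "card (F - G) \<le> 1" using card_mono[of "F - ?t" "F - G"] finF
      by (meson finite_Diff le_trans)
    hence "fadj K F G" using FK G unfolding fadj_def by auto
    hence "fadj K G F" using fadj_sym[OF fin dc pu] by blast
    thus ?thesis using F by blast
  qed
  show ?thesis unfolding SC_def
  proof (intro allI impI)
    fix F G assume F: "facet F K" and G: "facet G K"
    obtain F' where F': "facet F' (del v K)" "(fadj K)\<^sup>*\<^sup>* F F'" using bridge[OF F] by blast
    obtain G' where G': "facet G' (del v K)" "(fadj K)\<^sup>*\<^sup>* G G'" using bridge[OF G] by blast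
    have "(fadj K)\<^sup>*\<^sup>* F' G'" using lift sc F' G' unfolding SC_def by blast
    moreover have "(fadj K)\<^sup>*\<^sup>* G' G"
      using rtranclp_sym'[OF G'(2)] fadj_sym[OF fin dc pu] by blast
    ultimately show "(fadj K)\<^sup>*\<^sup>* F G" using F'(2) by (meson rtranclp_trans)
  qed
qed



lemma facet_lk_Pow: "facet H (lk x (Pow A)) \<Longrightarrow> H = A - {x}"
proof -
  assume H: "facet H (lk x (Pow A))"
  hence "H \<subseteq> A - {x}" "x \<in> A" unfolding facet_def lk_def by auto
  moreover have "A - {x} \<in> lk x (Pow A)" using calculation unfolding lk_def by auto
  ultimately show ?thesis using H unfolding facet_def by blast
qed

lemma shed_lk:
  assumes dc: "dclosed K" and sh: "shed K v" and xv: "x \<noteq> v"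
  shows "shed (lk x K) v"
  unfolding shed_def
proof (intro allI impI)
  fix T assume "facet T (del v (lk x K))"
  hence T: "facet T (lk x (del v K))" using lk_del_comm[OF xv] by simp
  from lk_facet[OF dclosed_del[OF dc] T] have "facet (insert x T) (del v K)" "x \<notin> T" by auto
  hence "facet (insert x T) K" using sh unfolding shed_def by blast
  from facet_lk[OF dc this insertI1] have "facet (insert x T - {x}) (lk x K)" by simp
  thus "facet T (lk x K)" using \<open>x \<notin> T\<close> by simp
qed

lemma VD_SC:
  "vertex_decomposable K \<Longrightarrow> finite K \<Longrightarrow> dclosed K \<Longrightarrow> pure d K \<Longrightarrow> SC K \<and> (\<forall>x. SC (lk x K))"
proof (induction K arbitrary: d rule: vertex_decomposable.induct)
  case (simplex A)
  have "SC (Pow A)" unfolding SC_def using facet_Pow by (metis rtranclp.rtrancl_refl)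
  moreover have "SC (lk x (Pow A))" for x
    unfolding SC_def using facet_lk_Pow by (metis rtranclp.rtrancl_refl)
  ultimately show ?case by blast
next
  case (decomp v K)
  have sh: "shed K v" using decomp.hyps(4) unfolding shed_def by blast
  have finl: "finite (lk v K)" "finite (del v K)" using decomp.prems(1)
    unfolding lk_def del_def by auto
  have dcl: "dclosed (lk v K)" "dclosed (del v K)"
    using dclosed_lk[OF decomp.prems(2)] dclosed_del[OF decomp.prems(2)] by auto
  have pdel: "pure d (del v K)" using pure_del[OF decomp.prems(3) sh] .
  have IHdel: "SC (del v K) \<and> (\<forall>x. SC (lk x (del v K)))"
    using decomp.IH(2)[OF finl(2) dcl(2) pdel] .
  have IHlk: "SC (lk v K)"
    using decomp.IH(1)[OF finl(1) dcl(1) pure_lk[OF decomp.prems]] by blast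
  have scK: "SC K" using SC_from_del[OF decomp.prems IHdel[THEN conjunct1] sh] .
  have "SC (lk x K)" for x
  proof (cases "x = v")
    case True thus ?thesis using IHlk by simp
  next
    case False
    have fin: "finite (lk x K)" using decomp.prems(1) unfolding lk_def by auto
    have dc: "dclosed (lk x K)" using dclosed_lk[OF decomp.prems(2)] .
    have "SC (del v (lk x K))" using IHdel lk_del_comm[OF False] by metis
    thus ?thesis using SC_from_del[OF fin dc pure_lk[OF decomp.prems] _ shed_lk[OF decomp.prems(2) sh False]]
      by blast
  qed
  thus ?case using scK by blast
qed



abbreviation NC where "NC \<equiv> non_cover_complex"

definition graphlike :: "'a set \<Rightarrow> 'a set set \<Rightarrow> bool" where
  "graphlike W \<E> \<longleftrightarrow> (\<forall>e\<in>\<E>. e \<subseteq> W \<and> card e = 2)"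

lemma card2_eq: "card e = 2 \<Longrightarrow> a \<in> e \<Longrightarrow> b \<in> e \<Longrightarrow> a \<noteq> b \<Longrightarrow> e = {a, b}"
proof -
  assume a: "card e = 2" "a \<in> e" "b \<in> e" "a \<noteq> b"
  have "finite e" using a(1) by (metis card.infinite zero_neq_numeral)
  moreover have "{a,b} \<subseteq> e" using a by auto
  moreover have "card e \<le> card {a,b}" using a by simp
  ultimately have "{a,b} = e" by (rule card_seteq)
  thus ?thesis by simp
qed

lemma card2_ex: "card e = 2 \<Longrightarrow> \<exists>a b. a \<noteq> b \<and> e = {a, b}"
  using card_2_iff[of e] by blast

lemma NC_lk: assumes v: "v \<in> W" shows "lk v (NC W \<E>) = NC (W - {v}) {e\<in>\<E>. v \<notin> e}"
proof (rule set_eqI, rule iffI)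
  fix t assume "t \<in> lk v (NC W \<E>)"
  hence t: "t \<subseteq> W" "v \<notin> t" "insert v t \<subseteq> W" "\<exists>e\<in>\<E>. e \<subseteq> W - insert v t"
    unfolding lk_def non_cover_complex_def by auto
  then obtain e where e: "e \<in> \<E>" "e \<subseteq> W - insert v t" by blast
  have "t \<subseteq> W - {v}" using t by blast
  moreover have "v \<notin> e" "e \<subseteq> W - {v} - t" using e by auto
  ultimately show "t \<in> NC (W - {v}) {e\<in>\<E>. v \<notin> e}" unfolding non_cover_complex_def using e by blast
next
  fix t assume "t \<in> NC (W - {v}) {e\<in>\<E>. v \<notin> e}"
  then obtain e where e: "t \<subseteq> W - {v}" "e \<in> \<E>" "v \<notin> e" "e \<subseteq> W - {v} - t"
    unfolding non_cover_complex_def by blast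
  have "t \<in> NC W \<E>" unfolding non_cover_complex_def using e by blast
  moreover have "insert v t \<in> NC W \<E>" unfolding non_cover_complex_def using e v by blast
  ultimately show "t \<in> lk v (NC W \<E>)" unfolding lk_def using e by blast
qed

lemma NC_fin: "finite W \<Longrightarrow> finite (NC W \<E>)"
  unfolding non_cover_complex_def by (rule finite_subset[of _ "Pow W"]) auto

lemma NC_dclosed: "dclosed (NC W \<E>)"
  unfolding dclosed_def non_cover_complex_def by blast

lemma NC_facet_iff:
  assumes fin: "finite W" and g: "graphlike W \<E>"
  shows "facet F (NC W \<E>) \<longleftrightarrow> (\<exists>e\<in>\<E>. F = W - e)"
proof
  assume F: "facet F (NC W \<E>)"
  then obtain e where e: "e \<in> \<E>" "e \<subseteq> W - F" "F \<subseteq> W"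
    unfolding facet_def non_cover_complex_def by auto
  have eW: "e \<subseteq> W" using e g unfolding graphlike_def by auto
  have "W - e \<in> NC W \<E>" unfolding non_cover_complex_def using e eW by auto
  moreover have "F \<subseteq> W - e" using e by auto
  ultimately have "F = W - e" using F unfolding facet_def by blast
  thus "\<exists>e\<in>\<E>. F = W - e" using e by blast
next
  assume "\<exists>e\<in>\<E>. F = W - e"
  then obtain e where e: "e \<in> \<E>" "F = W - e" by blast
  have eW: "e \<subseteq> W" "card e = 2" using e g unfolding graphlike_def by auto
  have "F \<in> NC W \<E>" unfolding non_cover_complex_def using e eW by auto
  moreover have "\<not> (\<exists>S\<in>NC W \<E>. F \<subset> S)"
  proof
    assume "\<exists>S\<in>NC W \<E>. F \<subset> S"
    then obtain S f where S: "S \<subseteq> W" "F \<subset> S" "f \<in> \<E>" "f \<subseteq> W - S"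
      unfolding non_cover_complex_def by auto
    have "W - S \<subset> e" using S e eW by auto
    hence "f \<subset> e" using S by auto
    moreover have "finite e" using eW fin finite_subset by auto
    ultimately have "card f < card e" by (rule psubset_card_mono[rotated])
    moreover have "card f = 2" using S g unfolding graphlike_def by auto
    ultimately show False using eW by simp
  qed
  ultimately show "facet F (NC W \<E>)" unfolding facet_def by blast
qed

lemma NC_pure: assumes "finite W" "graphlike W \<E>" shows "pure (card W - 2) (NC W \<E>)"
  unfolding pure_def
proof (intro allI impI)
  fix F assume "facet F (NC W \<E>)"
  then obtain e where e: "e \<in> \<E>" "F = W - e" using NC_facet_iff[OF assms] by blast
  hence "e \<subseteq> W" "card e = 2" using assms(2) unfolding graphlike_def by auto
  thus "card F = card W - 2" using e assms(1) by (simp add: card_Diff_subset finite_subset)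
qed

lemma NC_notSC:
  assumes fin: "finite W" and g: "graphlike W \<E>"
    and e1: "e1 \<in> \<E>" "u \<in> e1" and e2: "e2 \<in> \<E>" "w \<in> e2"
    and nr: "\<not> (adj \<E>)\<^sup>*\<^sup>* u w"
  shows "\<not> SC (NC W \<E>)"
proof
  assume sc: "SC (NC W \<E>)"
  define Reach where "Reach = {e\<in>\<E>. \<exists>z\<in>e. (adj \<E>)\<^sup>*\<^sup>* u z}"
  have claim: "(fadj (NC W \<E>))\<^sup>*\<^sup>* F G \<Longrightarrow> (\<exists>e\<in>Reach. F = W - e) \<Longrightarrow> (\<exists>e\<in>Reach. G = W - e)" for F G
  proof (induction rule: rtranclp_induct)
    case base thus ?case .
  next
    case (step G H)
    then obtain e where e: "e \<in> Reach" "G = W - e" by blast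
    have "facet H (NC W \<E>)" "card (G - H) \<le> 1" using step(2) unfolding fadj_def by auto
    then obtain f where f: "f \<in> \<E>" "H = W - f" using NC_facet_iff[OF fin g] by blast
    have fW: "f \<subseteq> W" "card f = 2" using f g unfolding graphlike_def by auto
    have eW: "card e = 2" using e g unfolding graphlike_def Reach_def by auto
    have "G - H = f - e" using e f fW by auto
    hence c: "card (f - e) \<le> 1" using \<open>card (G - H) \<le> 1\<close> by simp
    have "f \<inter> e \<noteq> {}"
    proof
      assume "f \<inter> e = {}"
      hence "f - e = f" by auto
      thus False using c fW by simp
    qed
    then obtain z' where z': "z' \<in> f" "z' \<in> e" by blast
    obtain z where z: "z \<in> e" "(adj \<E>)\<^sup>*\<^sup>* u z" using e unfolding Reach_def by blast
    have "(adj \<E>)\<^sup>*\<^sup>* u z'"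
    proof (cases "z = z'")
      case True thus ?thesis using z by simp
    next
      case False
      hence "e = {z, z'}" using card2_eq[OF eW z(1) z'(2)] by simp
      hence "adj \<E> z z'" using e unfolding adj_def Reach_def by auto
      thus ?thesis using z(2) by (metis rtranclp.rtrancl_into_rtrancl)
    qed
    hence "f \<in> Reach" unfolding Reach_def using f z' by blast
    thus ?case using f by blast
  qed
  have F1: "facet (W - e1) (NC W \<E>)" "facet (W - e2) (NC W \<E>)"
    using NC_facet_iff[OF fin g] e1 e2 by auto
  have "(fadj (NC W \<E>))\<^sup>*\<^sup>* (W - e1) (W - e2)" using sc F1 unfolding SC_def by blast
  moreover have "e1 \<in> Reach" unfolding Reach_def using e1 by blast
  ultimately obtain e' where e': "e' \<in> Reach" "W - e2 = W - e'" using claim by blast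
  have "e2 \<subseteq> W" "e' \<subseteq> W" using e' e2 g unfolding graphlike_def Reach_def by auto
  hence "e2 = e'" using e'(2) by blast
  then obtain z where z: "z \<in> e2" "(adj \<E>)\<^sup>*\<^sup>* u z" using e' unfolding Reach_def by blast
  have c2: "card e2 = 2" using e2 g unfolding graphlike_def by auto
  have "(adj \<E>)\<^sup>*\<^sup>* u w"
  proof (cases "z = w")
    case True thus ?thesis using z by simp
  next
    case False
    hence "e2 = {z, w}" using card2_eq[OF c2 z(1) e2(2)] by simp
    hence "adj \<E> z w" using e2 unfolding adj_def by auto
    thus ?thesis using z(2) by (metis rtranclp.rtrancl_into_rtrancl)
  qed
  thus False using nr by simp
qed



lemma walk_exists:
  assumes "R\<^sup>*\<^sup>* a b"
  shows "\<exists>p. p \<noteq> [] \<and> hd p = a \<and> last p = b \<and> distinct p \<and>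
             (\<forall>i. Suc i < length p \<longrightarrow> R (p!i) (p!Suc i))"
  using assms
proof (induction rule: converse_rtranclp_induct)
  case base
  show ?case by (rule exI[of _ "[b]"]) simp
next
  case (step a y)
  then obtain p where p: "p \<noteq> []" "hd p = y" "last p = b" "distinct p"
    "\<forall>i. Suc i < length p \<longrightarrow> R (p!i) (p!Suc i)" by blast
  show ?case
  proof (cases "a \<in> set p")
    case True
    then obtain i where i: "i < length p" "p ! i = a" by (metis in_set_conv_nth)
    let ?q = "drop i p"
    have "?q \<noteq> []" using i by simp
    moreover have "hd ?q = a" using i by (simp add: hd_drop_conv_nth)
    moreover have "last ?q = b" using i p by simp
    moreover have "distinct ?q" using p by simp
    moreover have "\<forall>j. Suc j < length ?q \<longrightarrow> R (?q!j) (?q!Suc j)"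
    proof (intro allI impI)
      fix j assume "Suc j < length ?q"
      hence "Suc (i + j) < length p" by simp
      hence "R (p!(i+j)) (p!Suc (i+j))" using p by blast
      thus "R (?q!j) (?q!Suc j)" using i by simp
    qed
    ultimately show ?thesis by blast
  next
    case False
    let ?q = "a # p"
    have "\<forall>j. Suc j < length ?q \<longrightarrow> R (?q!j) (?q!Suc j)"
    proof (intro allI impI)
      fix j assume j: "Suc j < length ?q"
      show "R (?q!j) (?q!Suc j)"
      proof (cases j)
        case 0 thus ?thesis using step(1) p by (simp add: hd_conv_nth)
      next
        case (Suc k) thus ?thesis using p j by simp
      qed
    qed
    thus ?thesis using p False by auto
  qed
qed

context
  fixes V :: "'a set" and E :: "'a set set"
  assumes fo: "forest V E"
begin

lemma finV: "finite V" using fo unfolding forest_def simple_graph_def by auto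
lemma gl: "graphlike V E" using fo unfolding forest_def simple_graph_def graphlike_def by auto
lemma finE: "finite E"
proof -
  have "E \<subseteq> Pow V" using gl unfolding graphlike_def by auto
  thus ?thesis using finV finite_subset by blast
qed
lemma edge: "e \<in> E \<Longrightarrow> e \<subseteq> V \<and> card e = 2" using gl unfolding graphlike_def by auto

lemma adj_edge: "adj E u w \<Longrightarrow> {u, w} \<in> E \<and> u \<in> V \<and> w \<in> V \<and> u \<noteq> w"
proof -
  assume "adj E u w"
  hence e: "{u,w} \<in> E" unfolding adj_def .
  hence "card {u,w} = 2" "{u,w} \<subseteq> V" using edge by auto
  thus ?thesis using e by (cases "u = w") auto
qed

lemma internal_iff: "v \<in> internal_vertices V E \<longleftrightarrow>
   v \<in> V \<and> (\<exists>e1\<in>E. \<exists>e2\<in>E. e1 \<noteq> e2 \<and> v \<in> e1 \<and> v \<in> e2)"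
proof
  assume "v \<in> internal_vertices V E"
  hence v: "v \<in> V" "Suc 1 \<le> card {e \<in> E. v \<in> e}"
    unfolding internal_vertices_def degree_def by auto
  from card_le_Suc_iff[THEN iffD1, OF v(2)] obtain e1 B where
    B: "{e \<in> E. v \<in> e} = insert e1 B" "e1 \<notin> B" "1 \<le> card B" by blast
  have "B \<noteq> {}" using B(3) by auto
  then obtain e2 where "e2 \<in> B" by blast
  hence "e1 \<in> E" "e2 \<in> E" "e1 \<noteq> e2" "v \<in> e1" "v \<in> e2" using B by auto
  thus "v \<in> V \<and> (\<exists>e1\<in>E. \<exists>e2\<in>E. e1 \<noteq> e2 \<and> v \<in> e1 \<and> v \<in> e2)" using v by blast
next
  assume a: "v \<in> V \<and> (\<exists>e1\<in>E. \<exists>e2\<in>E. e1 \<noteq> e2 \<and> v \<in> e1 \<and> v \<in> e2)"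
  then obtain e1 e2 where e: "e1 \<in> E" "e2 \<in> E" "e1 \<noteq> e2" "v \<in> e1" "v \<in> e2" by blast
  have "{e1, e2} \<subseteq> {e \<in> E. v \<in> e}" using e by auto
  moreover have "finite {e \<in> E. v \<in> e}" using finE by simp
  ultimately have "card {e1,e2} \<le> card {e \<in> E. v \<in> e}" by (rule card_mono[rotated])
  thus "v \<in> internal_vertices V E" using a e(3)
    unfolding internal_vertices_def degree_def by simp
qed

lemma no_cross:
  assumes xy: "{x,y} \<in> E" and xz: "{x,z} \<in> E" and yz: "y \<noteq> z"
  shows "\<not> (adj {e\<in>E. x \<notin> e})\<^sup>*\<^sup>* y z"
proof
  let ?E' = "{e\<in>E. x \<notin> e}"
  assume "(adj ?E')\<^sup>*\<^sup>* y z"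
  from walk_exists[OF this] obtain p where p: "p \<noteq> []" "hd p = y" "last p = z" "distinct p"
    "\<forall>i. Suc i < length p \<longrightarrow> adj ?E' (p!i) (p!Suc i)" by blast
  have xyV: "x \<in> V" "y \<in> V" "x \<noteq> y" using adj_edge[of x y] xy unfolding adj_def by auto
  have el: "p!i \<in> V \<and> p!i \<noteq> x" if "i < length p" for i
  proof (cases i)
    case 0 thus ?thesis using p xyV by (simp add: hd_conv_nth[symmetric])
  next
    case (Suc k)
    hence "adj ?E' (p!k) (p!i)" using p that by auto
    hence "{p!k, p!i} \<in> E" "x \<notin> {p!k, p!i}" unfolding adj_def by auto
    thus ?thesis using edge by auto
  qed
  have len: "length p \<ge> 2"
  proof (rule ccontr)
    assume "\<not> length p \<ge> 2"
    moreover have "length p \<noteq> 0" using p(1) by simp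
    ultimately have "length p = 1" by linarith
    hence "hd p = last p" using p(1) by (cases p) auto
    thus False using p yz by simp
  qed
  let ?cs = "x # p"
  have "is_cycle V E ?cs"
    unfolding is_cycle_def
  proof (intro conjI)
    show "3 \<le> length ?cs" using len by simp
    show "distinct ?cs" using p el by (auto simp: in_set_conv_nth)
    show "set ?cs \<subseteq> V" using el xyV by (auto simp: in_set_conv_nth)
    show "\<forall>i<length ?cs - 1. adj E (?cs ! i) (?cs ! (i + 1))"
    proof (intro allI impI)
      fix i assume i: "i < length ?cs - 1"
      show "adj E (?cs ! i) (?cs ! (i + 1))"
      proof (cases i)
        case 0 thus ?thesis using xy p by (simp add: adj_def hd_conv_nth[symmetric])
      next
        case (Suc k)
        hence "adj ?E' (p!k) (p!Suc k)" using p i by auto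
        thus ?thesis using Suc unfolding adj_def by simp
      qed
    qed
    show "adj E (last ?cs) (hd ?cs)" using p xz by (simp add: adj_def insert_commute)
  qed
  thus False using fo unfolding forest_def by blast
qed

lemma path3:
  assumes r: "(adj E)\<^sup>*\<^sup>* a b" and ai: "a \<in> internal_vertices V E"
    and bi: "b \<in> internal_vertices V E" and ab: "a \<noteq> b"
  shows "adj E a b \<or> (\<exists>x y z. {x,y} \<in> E \<and> {x,z} \<in> E \<and> y \<noteq> z \<and>
            y \<in> internal_vertices V E \<and> z \<in> internal_vertices V E)"
proof -
  from walk_exists[OF r] obtain p where p: "p \<noteq> []" "hd p = a" "last p = b" "distinct p"
    "\<forall>i. Suc i < length p \<longrightarrow> adj E (p!i) (p!Suc i)" by blast
  have p0: "p!0 = a" using p by (simp add: hd_conv_nth[symmetric])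
  have len: "length p \<ge> 2"
  proof (rule ccontr)
    assume "\<not> length p \<ge> 2"
    moreover have "length p \<noteq> 0" using p(1) by simp
    ultimately have "length p = 1" by linarith
    hence "hd p = last p" using p(1) by (cases p) auto
    thus False using p ab by simp
  qed
  show ?thesis
  proof (cases "length p = 2")
    case True
    hence "p!1 = b" using p by (simp add: last_conv_nth)
    thus ?thesis using p(5) True p0 by force
  next
    case False
    hence l3: "length p \<ge> 3" using len by simp
    have e01: "{p!0, p!1} \<in> E" using p(5) l3 unfolding adj_def by auto
    have e12: "{p!1, p!2} \<in> E" using p(5)[rule_format, of 1] l3 unfolding adj_def by (auto simp: numeral_2_eq_2)
    have d02: "p!0 \<noteq> p!2" using nth_eq_iff_index_eq[OF p(4), of 0 2] l3 p(1) by simp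
    have zi: "p!2 \<in> internal_vertices V E"
    proof (cases "length p = 3")
      case True
      hence "p!2 = b" using p by (simp add: last_conv_nth)
      thus ?thesis using bi by simp
    next
      case False
      hence l4: "length p \<ge> 4" using l3 by simp
      have e23: "{p!2, p!3} \<in> E" using p(5)[rule_format, of 2] l4 unfolding adj_def by (auto simp: numeral_2_eq_2 numeral_3_eq_3)
      have d: "p!1 \<noteq> p!3" "p!1 \<noteq> p!2" using nth_eq_iff_index_eq[OF p(4), of 1 3]
        nth_eq_iff_index_eq[OF p(4), of 1 2] l4 by auto
      have ne: "{p!1, p!2} \<noteq> {p!2, p!3}" using d by (auto simp: doubleton_eq_iff)
      have V2: "p!2 \<in> V" using e12 edge by auto
      show ?thesis
        apply (rule internal_iff[THEN iffD2])
        apply (rule conjI[OF V2])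
        apply (rule bexI[OF _ e12], rule bexI[OF _ e23])
        using ne by simp
    qed
    have "{p!1, p!0} \<in> E" using e01 by (simp add: insert_commute)
    thus ?thesis using e12 d02 zi ai p0 by blast
  qed
qed

end



lemma has_edge: "no_isolated_vertices V E \<Longrightarrow> v \<in> V \<Longrightarrow> \<exists>e\<in>E. v \<in> e"
proof -
  assume "no_isolated_vertices V E" "v \<in> V"
  hence "card {e\<in>E. v \<in> e} \<noteq> 0" unfolding no_isolated_vertices_def degree_def by fastforce
  hence "{e\<in>E. v \<in> e} \<noteq> {}" by (metis card.empty)
  thus ?thesis by blast
qed

lemma other_edge:
  assumes fo: "forest V E" and xy: "{x,y} \<in> E" and yi: "y \<in> internal_vertices V E"
  shows "\<exists>f\<in>E. y \<in> f \<and> x \<notin> f"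
proof -
  obtain e1 e2 where e: "e1 \<in> E" "e2 \<in> E" "e1 \<noteq> e2" "y \<in> e1" "y \<in> e2"
    using internal_iff[OF fo] yi by blast
  have xny: "x \<noteq> y" using adj_edge[OF fo, of x y] xy unfolding adj_def by blast
  obtain f where f: "f \<in> E" "y \<in> f" "f \<noteq> {x,y}" using e by metis
  have "x \<notin> f"
  proof
    assume "x \<in> f"
    moreover have "card f = 2" using edge[OF fo f(1)] by simp
    ultimately have "f = {x,y}" using card2_eq f xny by metis
    thus False using f by simp
  qed
  thus ?thesis using f by blast
qed

lemma only_if:
  assumes fo: "forest V E" and ni: "no_isolated_vertices V E"
    and vd: "vertex_decomposable (NC V E)"
  shows "connected_graph V E \<and> card (internal_vertices V E) \<le> 2"
proof -
  have fin: "finite V" using finV[OF fo] .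
  have g: "graphlike V E" using gl[OF fo] .
  have inv: "SC (NC V E) \<and> (\<forall>x. SC (lk x (NC V E)))"
    using VD_SC[OF vd NC_fin[OF fin] NC_dclosed NC_pure[OF fin g]] .
  have conn: "connected_graph V E"
    unfolding connected_graph_def
  proof (intro ballI, rule ccontr)
    fix u w assume u: "u \<in> V" and w: "w \<in> V" and nr: "\<not> (adj E)\<^sup>*\<^sup>* u w"
    obtain e1 where "e1 \<in> E" "u \<in> e1" using has_edge[OF ni u] by blast
    moreover obtain e2 where "e2 \<in> E" "w \<in> e2" using has_edge[OF ni w] by blast
    ultimately have "\<not> SC (NC V E)" using NC_notSC[OF fin g _ _ _ _ nr] by blast
    thus False using inv by blast
  qed
  have "card (internal_vertices V E) \<le> 2"
  proof (rule ccontr)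
    let ?I = "internal_vertices V E"
    assume "\<not> card ?I \<le> 2"
    hence "Suc (Suc (Suc 0)) \<le> card ?I" by simp
    from card_le_Suc_iff[THEN iffD1, OF this] obtain a B where
      B: "?I = insert a B" "a \<notin> B" "Suc (Suc 0) \<le> card B" by blast
    from card_le_Suc_iff[THEN iffD1, OF B(3)] obtain b C where
      C: "B = insert b C" "b \<notin> C" "Suc 0 \<le> card C" by blast
    from card_le_Suc_iff[THEN iffD1, OF C(3)] obtain c D where
      D: "C = insert c D" "c \<notin> D" by blast
    have abc: "a \<in> ?I" "b \<in> ?I" "c \<in> ?I" "a \<noteq> b" "b \<noteq> c" "a \<noteq> c"
      using B C D by auto
    have inV: "a \<in> V" "b \<in> V" "c \<in> V" using abc unfolding internal_vertices_def by auto
    have rab: "(adj E)\<^sup>*\<^sup>* a b" "(adj E)\<^sup>*\<^sup>* b c" using conn inV unfolding connected_graph_def by auto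
    have "\<exists>x y z. {x,y} \<in> E \<and> {x,z} \<in> E \<and> y \<noteq> z \<and> y \<in> ?I \<and> z \<in> ?I"
    proof -
      have c1: "adj E a b \<or> (\<exists>x y z. {x,y} \<in> E \<and> {x,z} \<in> E \<and> y \<noteq> z \<and> y \<in> ?I \<and> z \<in> ?I)"
        using path3[OF fo rab(1) abc(1,2,4)] .
      have c2: "adj E b c \<or> (\<exists>x y z. {x,y} \<in> E \<and> {x,z} \<in> E \<and> y \<noteq> z \<and> y \<in> ?I \<and> z \<in> ?I)"
        using path3[OF fo rab(2) abc(2,3,5)] .
      show ?thesis
      proof (cases "adj E a b \<and> adj E b c")
        case True
        hence "{b,a} \<in> E" "{b,c} \<in> E" unfolding adj_def by (auto simp: insert_commute)
        thus ?thesis using abc by blast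
      next
        case False thus ?thesis using c1 c2 by blast
      qed
    qed
    then obtain x y z where xyz: "{x,y} \<in> E" "{x,z} \<in> E" "y \<noteq> z" "y \<in> ?I" "z \<in> ?I" by blast
    let ?E' = "{e\<in>E. x \<notin> e}"
    have xV: "x \<in> V" using edge[OF fo xyz(1)] by auto
    have lkx: "lk x (NC V E) = NC (V - {x}) ?E'" using NC_lk[OF xV] .
    have g': "graphlike (V - {x}) ?E'" using g unfolding graphlike_def by auto
    obtain f1 where f1: "f1 \<in> E" "y \<in> f1" "x \<notin> f1" using other_edge[OF fo xyz(1,4)] by blast
    obtain f2 where f2: "f2 \<in> E" "z \<in> f2" "x \<notin> f2" using other_edge[OF fo xyz(2,5)] by blast
    have nr: "\<not> (adj ?E')\<^sup>*\<^sup>* y z" using no_cross[OF fo xyz(1-3)] .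
    have "\<not> SC (NC (V - {x}) ?E')"
      using NC_notSC[OF _ g' _ _ _ _ nr] fin f1 f2 by blast
    thus False using inv lkx by metis
  qed
  thus ?thesis using conn by blast
qed



lemma NC_single: "e \<subseteq> W \<Longrightarrow> NC W {e} = Pow (W - e)"
  unfolding non_cover_complex_def by auto

lemma shed_from:
  assumes dc: "dclosed K" and h: "\<And>F. facet F (del v K) \<Longrightarrow> insert v F \<notin> K"
  shows "\<forall>F. facet F (del v K) \<longrightarrow> facet F K"
proof (intro allI impI)
  fix F assume F: "facet F (del v K)"
  have FK: "F \<in> K" "v \<notin> F" using F unfolding facet_def del_def by auto
  have "\<not> (\<exists>G\<in>K. F \<subset> G)"
  proof
    assume "\<exists>G\<in>K. F \<subset> G"
    then obtain G where G: "G \<in> K" "F \<subset> G" by blast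
    show False
    proof (cases "v \<in> G")
      case False
      hence "G \<in> del v K" using G unfolding del_def by auto
      thus False using F G unfolding facet_def by blast
    next
      case True
      hence "insert v F \<subseteq> G" using G by auto
      hence "insert v F \<in> K" using dclosedD[OF dc G(1)] by blast
      thus False using h[OF F] by simp
    qed
  qed
  thus "facet F K" using FK unfolding facet_def by blast
qed

lemma sing_VD:
  "finite P \<Longrightarrow> P \<noteq> {} \<Longrightarrow> finite W \<Longrightarrow> P \<subseteq> W \<Longrightarrow> vertex_decomposable (NC W ((\<lambda>p. {p}) ` P))"
proof (induction P arbitrary: W rule: finite_ne_induct)
  case (singleton p)
  have "NC W ((\<lambda>p. {p}) ` {p}) = Pow (W - {p})" using NC_single[of "{p}" W] singleton by simp
  thus ?case using vertex_decomposable.simplex[of "W - {p}"] singleton by simp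
next
  case (insert p F)
  let ?K = "NC W ((\<lambda>p. {p}) ` insert p F)"
  obtain q where q: "q \<in> F" using insert(2) by blast
  have pq: "p \<noteq> q" using q insert(3) by blast
  have v: "{p} \<in> ?K" unfolding non_cover_complex_def using insert(6) q pq by auto
  have pW: "p \<in> W" using insert(6) by simp
  have "{e \<in> (\<lambda>p. {p}) ` insert p F. p \<notin> e} = (\<lambda>p. {p}) ` F" using insert(3) by auto
  hence lk: "lk p ?K = NC (W - {p}) ((\<lambda>p. {p}) ` F)" using NC_lk[OF pW] by simp
  have del: "del p ?K = Pow (W - {p})"
    unfolding del_def non_cover_complex_def using pW by auto
  have "vertex_decomposable (lk p ?K)" unfolding lk
    using insert(4)[of "W - {p}"] insert(5,6) insert(3) by auto
  moreover have "vertex_decomposable (del p ?K)" unfolding del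
    using vertex_decomposable.simplex[of "W - {p}"] insert(5) by simp
  moreover have "\<forall>G. facet G (del p ?K) \<longrightarrow> facet G ?K"
  proof (rule shed_from[OF NC_dclosed])
    fix G assume "facet G (del p ?K)"
    hence "G = W - {p}" unfolding del using facet_Pow by blast
    hence "insert p G = W" using pW by auto
    thus "insert p G \<notin> ?K" unfolding non_cover_complex_def by auto
  qed
  ultimately show ?case using vertex_decomposable.decomp[OF v] by blast
qed

lemma star_VD:
  "finite \<E> \<Longrightarrow> \<E> \<noteq> {} \<Longrightarrow> finite W \<Longrightarrow> c \<in> W \<Longrightarrow> (\<forall>e\<in>\<E>. \<exists>l\<in>W. l \<noteq> c \<and> e = {c,l})
   \<Longrightarrow> vertex_decomposable (NC W \<E>)"
proof (induction \<E> arbitrary: W rule: finite_ne_induct)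
  case (singleton e)
  have "e \<subseteq> W" using singleton by auto
  hence "NC W {e} = Pow (W - e)" by (rule NC_single)
  thus ?case using vertex_decomposable.simplex[of "W - e"] singleton by simp
next
  case (insert e F)
  let ?K = "NC W (insert e F)"
  have E7: "\<exists>m\<in>W. m \<noteq> c \<and> f = {c,m}" if "f \<in> insert e F" for f
    using insert(7) that by (rule bspec)
  obtain l where l: "l \<in> W" "l \<noteq> c" "e = {c,l}" using E7[OF insertI1] by blast
  obtain e' where e': "e' \<in> F" using insert(2) by blast
  obtain l' where l': "l' \<in> W" "l' \<noteq> c" "e' = {c,l'}" using E7[OF insertI2[OF e']] by blast
  have ll': "l' \<noteq> l" using l l' e' insert(3) by blast
  have e'W: "e' \<subseteq> W - {l}" using l' ll' l(2) insert(6) by auto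
  have v: "{l} \<in> ?K" unfolding non_cover_complex_def mem_Collect_eq
    by (intro conjI bexI[of _ e']) (use e'W e' l(1) in auto)
  have noL: "l \<notin> f" if fF: "f \<in> F" for f
  proof -
    obtain m where "m \<in> W" "m \<noteq> c" "f = {c,m}" using E7[OF insertI2[OF fF]] by blast
    moreover have "f \<noteq> e" using fF insert(3) by blast
    ultimately show ?thesis using l by auto
  qed
  have "{f \<in> insert e F. l \<notin> f} = F" using noL l by auto
  hence lk: "lk l ?K = NC (W - {l}) F" using NC_lk[OF l(1)] by simp
  have del: "del l ?K = Pow (W - {l, c})"
  proof (rule set_eqI, rule iffI)
    fix S assume "S \<in> del l ?K"
    then obtain f where f: "S \<subseteq> W" "l \<notin> S" "f \<in> insert e F" "f \<subseteq> W - S"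
      unfolding del_def non_cover_complex_def by blast
    have "c \<in> f" using E7[OF f(3)] by auto
    thus "S \<in> Pow (W - {l, c})" using f by auto
  next
    fix S assume "S \<in> Pow (W - {l, c})"
    thus "S \<in> del l ?K" unfolding del_def non_cover_complex_def using l insert(6) by auto
  qed
  have "vertex_decomposable (lk l ?K)" unfolding lk
  proof (rule insert(4))
    show "finite (W - {l})" using insert(5) by simp
    show "c \<in> W - {l}" using insert(6) l by simp
    show "\<forall>e\<in>F. \<exists>m\<in>W - {l}. m \<noteq> c \<and> e = {c, m}"
    proof
      fix f assume f: "f \<in> F"
      then obtain m where "m \<in> W" "m \<noteq> c" "f = {c,m}" using E7[OF insertI2[OF f]] by blast
      thus "\<exists>m\<in>W - {l}. m \<noteq> c \<and> f = {c, m}" using noL[OF f] by auto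
    qed
  qed
  moreover have "vertex_decomposable (del l ?K)" unfolding del
    using vertex_decomposable.simplex[of "W - {l, c}"] insert(5) by simp
  moreover have "\<forall>G. facet G (del l ?K) \<longrightarrow> facet G ?K"
  proof (rule shed_from[OF NC_dclosed])
    fix G assume "facet G (del l ?K)"
    hence "G = W - {l, c}" unfolding del using facet_Pow by blast
    hence G: "insert l G = W - {c}" using l by auto
    show "insert l G \<notin> ?K"
    proof
      assume "insert l G \<in> ?K"
      then obtain f where f: "f \<in> insert e F" "f \<subseteq> W - (W - {c})"
        unfolding non_cover_complex_def G by blast
      obtain m where "m \<in> W" "m \<noteq> c" "f = {c,m}" using E7[OF f(1)] by blast
      thus False using f(2) by auto
    qed
  qed
  ultimately show ?case using vertex_decomposable.decomp[OF v] by blast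
qed



lemma closed_reach:
  assumes "\<And>t s. t \<in> S \<Longrightarrow> R t s \<Longrightarrow> s \<in> S" "a \<in> S" "R\<^sup>*\<^sup>* a b"
  shows "b \<in> S"
  using assms(3) by induction (use assms in auto)

lemma edge_with:
  assumes fo: "forest V E" and e: "e \<in> E" "c \<in> e"
  shows "\<exists>l\<in>V. l \<noteq> c \<and> e = {c,l}"
proof -
  have eV: "e \<subseteq> V" "card e = 2" using edge[OF fo e(1)] by auto
  obtain x y where xy: "x \<noteq> y" "e = {x,y}" using card2_ex[OF eV(2)] by blast
  show ?thesis
  proof (cases "c = x")
    case True thus ?thesis using xy eV by auto
  next
    case False hence "c = y" using xy e by auto
    thus ?thesis using xy eV by (auto simp: insert_commute)
  qed
qed

lemma leaf_leaf:
  assumes fo: "forest V E" and conn: "connected_graph V E" and pq: "{p,q} \<in> E"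
    and pI: "p \<notin> internal_vertices V E" and qI: "q \<notin> internal_vertices V E"
  shows "V = {p,q}"
proof -
  have pqV: "{p,q} \<subseteq> V" using edge[OF fo pq] by auto
  have cl: "s \<in> {p,q}" if t: "t \<in> {p,q}" and a: "adj E t s" for t s
  proof (rule ccontr)
    assume "s \<notin> {p,q}"
    hence ne: "{p,q} \<noteq> {t,s}" by auto
    have ts: "{t,s} \<in> E" using a unfolding adj_def .
    have "t \<in> internal_vertices V E"
      apply (rule internal_iff[OF fo, THEN iffD2])
      apply (rule conjI) using t pqV apply blast
      apply (rule bexI[OF _ pq], rule bexI[OF _ ts]) using ne t by simp
    thus False using t pI qI by auto
  qed
  have "V \<subseteq> {p,q}"
  proof
    fix w assume "w \<in> V"
    hence "(adj E)\<^sup>*\<^sup>* p w" using conn pqV unfolding connected_graph_def by auto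
    thus "w \<in> {p,q}" using closed_reach[of "{p,q}" "adj E" p w] cl by auto
  qed
  thus ?thesis using pqV by blast
qed

lemma if_dir:
  assumes fo: "forest V E" and ne: "V \<noteq> {}" and ni: "no_isolated_vertices V E"
    and conn: "connected_graph V E" and cI: "card (internal_vertices V E) \<le> 2"
  shows "vertex_decomposable (NC V E)"
proof -
  let ?I = "internal_vertices V E"
  have fin: "finite V" using finV[OF fo] .
  have finI: "finite ?I" using fin unfolding internal_vertices_def by auto
  have IV: "?I \<subseteq> V" unfolding internal_vertices_def by auto
  obtain v0 where "v0 \<in> V" using ne by blast
  then obtain e0 where e0: "e0 \<in> E" using has_edge[OF ni] by blast
  have key: "(\<exists>t\<in>f. t \<in> ?I) \<or> V = f" if f: "f \<in> E" for f
  proof -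
    obtain p q where "p \<noteq> q" "f = {p,q}" using card2_ex edge[OF fo f] by blast
    thus ?thesis using leaf_leaf[OF fo conn] f by blast
  qed
  have "card ?I = 0 \<or> card ?I = 1 \<or> card ?I = 2" using cI by auto
  moreover
  { assume "card ?I = 0"
    hence I0: "?I = {}" using finI by simp
    have Ve0: "V = e0" using key[OF e0] I0 by blast
    have "E = {e0}"
    proof (rule set_eqI, rule iffI)
      fix f assume f: "f \<in> E"
      have "f \<subseteq> e0" "card f = 2" "card e0 = 2" using edge[OF fo f] edge[OF fo e0] Ve0 by auto
      moreover have "finite e0" using fin Ve0 by simp
      ultimately have "f = e0" using card_subset_eq by metis
      thus "f \<in> {e0}" by simp
    qed (use e0 in simp)
    hence "NC V E = Pow (V - e0)" using NC_single[of e0 V] Ve0 by simp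
    hence "vertex_decomposable (NC V E)" using vertex_decomposable.simplex[of "V - e0"] fin by simp }
  moreover
  { assume "card ?I = 1"
    hence "card ?I = Suc 0" by simp
    from card_1_singleton_iff[THEN iffD1, OF this] obtain c where Ic: "?I = {c}" by blast
    have cV: "c \<in> V" using Ic IV by auto
    have ce: "c \<in> f" if f: "f \<in> E" for f using key[OF f] Ic cV by auto
    have "vertex_decomposable (NC V E)"
    proof (rule star_VD[OF finE[OF fo] _ fin cV])
      show "E \<noteq> {}" using e0 by blast
      show "\<forall>e\<in>E. \<exists>l\<in>V. l \<noteq> c \<and> e = {c, l}" using edge_with[OF fo] ce by blast
    qed }
  moreover
  { assume "card ?I = 2"
    from card_2_iff[THEN iffD1, OF this] obtain a b where ab: "a \<noteq> b" "?I = {a,b}" by blast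
    have abV: "a \<in> V" "b \<in> V" using ab IV by auto
    have aorb: "a \<in> f \<or> b \<in> f" if f: "f \<in> E" for f using key[OF f] ab abV by auto
    have abE: "{a,b} \<in> E"
    proof (rule ccontr)
      assume nab: "{a,b} \<notin> E"
      let ?S = "{a} \<union> {t. {a,t} \<in> E}"
      have cl: "s \<in> ?S" if t: "t \<in> ?S" and adj: "adj E t s" for t s
      proof (cases "t = a")
        case True thus ?thesis using adj unfolding adj_def by auto
      next
        case False
        hence at: "{a,t} \<in> E" using t by auto
        have ts: "{t,s} \<in> E" "t \<noteq> s" using adj_edge[OF fo adj] by auto
        show ?thesis
        proof (rule ccontr)
          assume "s \<notin> ?S"
          hence sa: "s \<noteq> a" by auto
          have "{a,t} \<noteq> {t,s}" using sa ts(2) by (auto simp: doubleton_eq_iff)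
          have "t \<in> ?I"
            apply (rule internal_iff[OF fo, THEN iffD2])
            apply (rule conjI) using edge[OF fo at] apply blast
            apply (rule bexI[OF _ at], rule bexI[OF _ ts(1)]) using \<open>{a,t} \<noteq> {t,s}\<close> by simp
          hence "t = b" using ab False by auto
          thus False using at nab by simp
        qed
      qed
      have "(adj E)\<^sup>*\<^sup>* a b" using conn abV unfolding connected_graph_def by auto
      hence "b \<in> ?S" using closed_reach[of ?S "adj E" a b] cl by blast
      thus False using ab nab by auto
    qed
    let ?K = "NC V E"
    obtain f where f: "f \<in> E" "b \<in> f" "a \<notin> f" using other_edge[OF fo abE] ab by blast
    have v: "{a} \<in> ?K" unfolding non_cover_complex_def mem_Collect_eq
      by (intro conjI bexI[of _ f]) (use f edge[OF fo f(1)] abV in auto)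
    let ?E' = "{e\<in>E. a \<notin> e}"
    have lk: "lk a ?K = NC (V - {a}) ?E'" using NC_lk[OF abV(1)] .
    have "vertex_decomposable (lk a ?K)" unfolding lk
    proof (rule star_VD)
      show "finite ?E'" using finE[OF fo] by simp
      show "?E' \<noteq> {}" using f by blast
      show "finite (V - {a})" using fin by simp
      show "b \<in> V - {a}" using abV ab by simp
      show "\<forall>e\<in>?E'. \<exists>l\<in>V - {a}. l \<noteq> b \<and> e = {b, l}"
      proof
        fix e assume e: "e \<in> ?E'"
        hence "b \<in> e" using aorb by blast
        then obtain l where "l \<in> V" "l \<noteq> b" "e = {b,l}" using edge_with[OF fo] e by blast
        thus "\<exists>l\<in>V - {a}. l \<noteq> b \<and> e = {b, l}" using e by auto
      qed
    qed
    moreover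
    let ?P = "{p. {a,p} \<in> E}"
    have del: "del a ?K = NC (V - {a}) ((\<lambda>p. {p}) ` ?P)"
    proof (rule set_eqI, rule iffI)
      fix S assume "S \<in> del a ?K"
      then obtain e where S: "S \<subseteq> V" "a \<notin> S" "e \<in> E" "e \<subseteq> V - S"
        unfolding del_def non_cover_complex_def by blast
      have "\<exists>p\<in>?P. p \<in> V - {a} - S"
      proof (cases "a \<in> e")
        case True
        then obtain l where "l \<in> V" "l \<noteq> a" "e = {a,l}" using edge_with[OF fo S(3)] by blast
        thus ?thesis using S by auto
      next
        case False
        hence "b \<in> e" using aorb S by blast
        thus ?thesis using abE S ab by auto
      qed
      thus "S \<in> NC (V - {a}) ((\<lambda>p. {p}) ` ?P)" unfolding non_cover_complex_def using S by auto
    next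
      fix S assume "S \<in> NC (V - {a}) ((\<lambda>p. {p}) ` ?P)"
      then obtain p where S: "S \<subseteq> V - {a}" "{a,p} \<in> E" "p \<in> V - {a} - S"
        unfolding non_cover_complex_def by auto
      have "{a,p} \<subseteq> V - S" using S abV by auto
      thus "S \<in> del a ?K" unfolding del_def non_cover_complex_def using S by blast
    qed
    have "vertex_decomposable (del a ?K)" unfolding del
    proof (rule sing_VD)
      have "?P \<subseteq> V - {a}"
      proof
        fix p assume "p \<in> ?P"
        then obtain l where "l \<in> V" "l \<noteq> a" "{a,p} = {a,l}" using edge_with[OF fo, of "{a,p}" a] by auto
        thus "p \<in> V - {a}" by (auto simp: doubleton_eq_iff)
      qed
      thus "finite ?P" "?P \<subseteq> V - {a}" using fin finite_subset by auto
      show "?P \<noteq> {}" using abE by blast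
      show "finite (V - {a})" using fin by simp
    qed
    moreover have "\<forall>F. facet F (del a ?K) \<longrightarrow> facet F ?K"
    proof (rule shed_from[OF NC_dclosed])
      fix F assume F: "facet F (del a ?K)"
      have F1: "F \<subseteq> V" "a \<notin> F" using F unfolding facet_def del_def non_cover_complex_def by auto
      show "insert a F \<notin> ?K"
      proof
        assume "insert a F \<in> ?K"
        then obtain e where e: "e \<in> E" "e \<subseteq> V - insert a F"
          unfolding non_cover_complex_def by blast
        have "b \<in> e" using aorb e by blast
        then obtain y where y: "y \<in> V" "y \<noteq> b" "e = {b,y}" using edge_with[OF fo e(1)] by blast
        have yF: "y \<notin> F" "y \<noteq> a" "b \<notin> F" using e y by auto
        have s1: "insert y F \<subseteq> V" using F1 y by auto
        have s2: "{a,b} \<subseteq> V - insert y F" using abV yF ab y(2) F1 by auto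
        have "insert y F \<in> ?K" unfolding non_cover_complex_def using s1 s2 abE by blast
        hence "insert y F \<in> del a ?K" unfolding del_def using yF F1 by auto
        moreover have "F \<subset> insert y F" using yF by auto
        ultimately show False using F unfolding facet_def by blast
      qed
    qed
    ultimately have "vertex_decomposable (NC V E)" using vertex_decomposable.decomp[OF v] by blast }
  ultimately show ?thesis by blast
qed


theorem theorem4p5:
  fixes V :: "'a set" and E :: "'a set set"
  assumes "forest V E"
    and "V \<noteq> {}"
    and "no_isolated_vertices V E"
  shows "vertex_decomposable (non_cover_complex V E) \<longleftrightarrow>
           connected_graph V E \<and> card (internal_vertices V E) \<le> 2"
proof
  assume "vertex_decomposable (non_cover_complex V E)"
  thus "connected_graph V E \<and> card (internal_vertices V E) \<le> 2"
    using only_if[OF assms(1,3)] by blast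
next
  assume "connected_graph V E \<and> card (internal_vertices V E) \<le> 2"
  thus "vertex_decomposable (non_cover_complex V E)"
    using if_dir[OF assms] by blast
qed

end
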